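(* Fix $0<p<1/2$ and let $\sigma=\sigma_p$ be the probability measure on $\partial\mathbb D$ defined by $\sigma(\partial\mathbb D)=1$ and, for every $n\ge0$ and every $I\in\mathcal D_n$ with left half $I_-\in\mathcal D_{n+1}$ and right half $I_+\in\mathcal D_{n+1}$: $\sigma(I_-)=p\,\sigma(I)$, $\sigma(I_+)=(1-p)\sigma(I)$ if $n$ is odd, and $\sigma(I_-)=(1-p)\sigma(I)$, $\sigma(I_+)=p\,\sigma(I)$ if $n$ is even. Let $u(z)=\int_{\partial\mathbb D}\frac{1-|z|^2}{|\xi-z|^2}d\sigma(\xi)$. Then there exists $c>0$ with $\frac{\sigma(I)}{|I|}\ge c\,u(z_I)$ for every arc $I\subset\partial\mathbb D$ if and only if $p>1/4$.
   Context: Identify $\partial\mathbb D$ with $[0,1)$ via $t\mapsto e^{2\pi it}$; $\mathcal D_n$ is the collection of dyadic arcs of generation $n$, the images of $[j2^{-n},(j+1)2^{-n})$, $0\le j<2^n$; "left half" means the image of the left half-interval. $m$ is normalized Lebesgue measure, $|I|=m(I)$, and $z_I=(1-|I|)\xi_I$ with $\xi_I$ the center of the arc $I$. *)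

theory Defs
  imports "HOL-Analysis.Analysis" "HOL-Probability.Probability"
begin

text \<open>The circle is identified with [0,1) via t \<mapsto> exp(2 pi i t).
  Measures on the circle are represented as Borel probability measures on the
  real line concentrated on [0,1).\<close>

definition dyadic :: "nat \<Rightarrow> nat \<Rightarrow> real set" where
  "dyadic n j = {real j / 2 ^ n ..< (real j + 1) / 2 ^ n}"

definition sigma_meas :: "real \<Rightarrow> real measure \<Rightarrow> bool" where
  "sigma_meas p M \<longleftrightarrow>
     sets M = sets borel \<and> prob_space M \<and> measure M {0..<1} = 1 \<and>
     (\<forall>n j. j < 2 ^ n \<longrightarrow>
        measure M (dyadic (Suc n) (2 * j)) =
          (if odd n then p else 1 - p) * measure M (dyadic n j) \<and>
        measure M (dyadic (Suc n) (2 * j + 1)) =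
          (if odd n then 1 - p else p) * measure M (dyadic n j))"

text \<open>Arc starting at angle parameter a with normalized length l (0 < l \<le> 1),
  as a subset of [0,1).\<close>

definition arc :: "real \<Rightarrow> real \<Rightarrow> real set" where
  "arc a l = {t \<in> {0..<1}. frac (t - a) < l}"

text \<open>z_I = (1 - |I|) xi_I, xi_I the centre of the arc.\<close>

definition zarc :: "real \<Rightarrow> real \<Rightarrow> complex" where
  "zarc a l = complex_of_real (1 - l) * cis (2 * pi * (a + l / 2))"

definition poisson :: "real measure \<Rightarrow> complex \<Rightarrow> real" where
  "poisson M z = (\<integral>t. (1 - (cmod z)\<^sup>2) / (cmod (cis (2 * pi * t) - z))\<^sup>2 \<partial>M)"

end

theory Submission
  imports Defs
begin
locale sig =
  fixes p :: real and M :: "real measure"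
  assumes p0: "0 < p" and p1: "p < 1/2" and sm: "sigma_meas p M"
begin

definition mu :: "nat \<Rightarrow> nat \<Rightarrow> real" where "mu n j = measure M (dyadic n j)"

lemma prob: "prob_space M" using sm unfolding sigma_meas_def by auto
lemma sets_M: "sets M = sets borel" using sm unfolding sigma_meas_def by auto
lemma space_M: "space M = UNIV" using sets_eq_imp_space_eq[OF sets_M] by simp
lemma meas01: "measure M {0..<1} = 1" using sm unfolding sigma_meas_def by auto

lemma mu_L: "j < 2^n \<Longrightarrow> mu (Suc n) (2*j) = (if odd n then p else 1 - p) * mu n j"
  using sm unfolding sigma_meas_def mu_def by auto
lemma mu_R: "j < 2^n \<Longrightarrow> mu (Suc n) (2*j+1) = (if odd n then 1 - p else p) * mu n j"
  using sm unfolding sigma_meas_def mu_def by auto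
lemma mu00: "mu 0 0 = 1" using meas01 by (simp add: mu_def dyadic_def)

lemma mu_nonneg: "mu n j \<ge> 0" by (simp add: mu_def)

lemma child_ge: assumes "j < 2^Suc n" shows "mu (Suc n) j \<ge> p * mu n (j div 2)"
proof -
  have jd: "j div 2 < 2^n" using assms by auto
  have "j = 2 * (j div 2) \<or> j = 2 * (j div 2) + 1" by presburger
  then show ?thesis
  proof
    assume "j = 2 * (j div 2)"
    then have "mu (Suc n) j = (if odd n then p else 1 - p) * mu n (j div 2)" using mu_L[OF jd] by metis
    then show ?thesis using p1 mu_nonneg[of n "j div 2"] by (auto intro: mult_right_mono)
  next
    assume "j = 2 * (j div 2) + 1"
    then have "mu (Suc n) j = (if odd n then 1 - p else p) * mu n (j div 2)" using mu_R[OF jd] by metis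
    then show ?thesis using p1 mu_nonneg[of n "j div 2"] by (auto intro: mult_right_mono)
  qed
qed

lemma anc_ge: "j < 2^(n+s) \<Longrightarrow> mu (n+s) j \<ge> p^s * mu n (j div 2^s)"
proof (induction s arbitrary: j)
  case 0 then show ?case by simp
next
  case (Suc s)
  have "mu (n + Suc s) j \<ge> p * mu (n+s) (j div 2)" using child_ge[of j "n+s"] Suc.prems by simp
  moreover have "j div 2 < 2^(n+s)" using Suc.prems by (auto simp: less_mult_imp_div_less)
  then have "mu (n+s) (j div 2) \<ge> p^s * mu n (j div 2 div 2^s)" using Suc.IH by blast
  moreover have "j div 2 div 2^s = j div 2^Suc s" by (simp add: div_mult2_eq)
  ultimately have "mu (n + Suc s) j \<ge> p * (p^s * mu n (j div 2^Suc s))"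
    using p0 by (smt (verit) mult_left_mono)
  then show ?case by simp
qed

lemma mu_ge: "j < 2^n \<Longrightarrow> mu n j \<ge> p^n"
  using anc_ge[of j 0 n] mu00 by simp

end
context sig begin

lemma adj_inner: "j + 1 < 2^n \<Longrightarrow>
   (odd n \<longrightarrow> p * mu n j \<le> (1-p) * mu n (j+1) \<and> p^2 * mu n (j+1) \<le> (1-p)^2 * mu n j) \<and>
   (even n \<longrightarrow> p^2 * mu n j \<le> (1-p)^2 * mu n (j+1) \<and> p * mu n (j+1) \<le> (1-p) * mu n j)"
proof (induction n arbitrary: j)
  case 0 then show ?case by simp
next
  case (Suc n)
  have pp: "p \<le> 1 - p" "0 < 1 - p" using p0 p1 by auto
  have "j = 2 * (j div 2) \<or> j = 2 * (j div 2) + 1" by presburger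
  then show ?case
  proof
    assume je: "j = 2 * (j div 2)"
    define i where "i = j div 2"
    have i: "i < 2^n" using Suc.prems je unfolding i_def by auto
    have A: "mu (Suc n) j = (if odd n then p else 1 - p) * mu n i" using mu_L[OF i] je i_def by metis
    have B: "mu (Suc n) (j+1) = (if odd n then 1 - p else p) * mu n i" using mu_R[OF i] je i_def by metis
    have m: "mu n i \<ge> 0" by (rule mu_nonneg)
    show ?thesis
    proof (cases "odd n")
      case True
      then have "mu (Suc n) j = p * mu n i" "mu (Suc n) (j+1) = (1-p) * mu n i" using A B by auto
      moreover have "p^2 * (p * mu n i) \<le> (1-p)^2 * ((1-p) * mu n i)"
        using pp p0 m by (intro mult_mono power_mono mult_right_mono) auto
      moreover have "p * ((1-p) * mu n i) \<le> (1-p) * (p * mu n i)" by (simp add: mult.left_commute)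
      ultimately show ?thesis using True by simp
    next
      case False
      then have "mu (Suc n) j = (1-p) * mu n i" "mu (Suc n) (j+1) = p * mu n i" using A B by auto
      moreover have "p^2 * (p * mu n i) \<le> (1-p)^2 * ((1-p) * mu n i)"
        using pp p0 m by (intro mult_mono power_mono mult_right_mono) auto
      moreover have "p * ((1-p) * mu n i) \<le> (1-p) * (p * mu n i)" by (simp add: mult.left_commute)
      ultimately show ?thesis using False by simp
    qed
  next
    assume jo: "j = 2 * (j div 2) + 1"
    define i where "i = j div 2"
    have i: "i + 1 < 2^n" using Suc.prems jo unfolding i_def by auto
    have A: "mu (Suc n) j = (if odd n then 1 - p else p) * mu n i" using mu_R[of i n] i jo i_def by auto
    have B: "mu (Suc n) (j+1) = (if odd n then p else 1 - p) * mu n (i+1)"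
      using mu_L[of "i+1" n] i jo i_def by (auto simp: algebra_simps)
    have m: "mu n i \<ge> 0" "mu n (i+1) \<ge> 0" by (rule mu_nonneg)+
    note IH = Suc.IH[OF i]
    have q: "0 \<le> p * (1-p)" using pp p0 by auto
    show ?thesis
    proof (cases "odd n")
      case True
      then have a: "mu (Suc n) j = (1-p) * mu n i" "mu (Suc n) (j+1) = p * mu n (i+1)" using A B by auto
      from True IH have h1: "p * mu n i \<le> (1-p) * mu n (i+1)" and h2: "p^2 * mu n (i+1) \<le> (1-p)^2 * mu n i" by auto
      have g1: "p^2 * ((1-p) * mu n i) \<le> (1-p)^2 * (p * mu n (i+1))"
        using mult_left_mono[OF h1 q] by (simp add: power2_eq_square algebra_simps)
      have g2: "p * (p * mu n (i+1)) \<le> (1-p) * ((1-p) * mu n i)"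
        using h2 by (simp add: power2_eq_square algebra_simps)
      show ?thesis using True a g1 g2 by simp
    next
      case False
      then have a: "mu (Suc n) j = p * mu n i" "mu (Suc n) (j+1) = (1-p) * mu n (i+1)" using A B by auto
      from False IH have h1: "p^2 * mu n i \<le> (1-p)^2 * mu n (i+1)" and h2: "p * mu n (i+1) \<le> (1-p) * mu n i" by auto
      have g1: "p * (p * mu n i) \<le> (1-p) * ((1-p) * mu n (i+1))"
        using h1 by (simp add: power2_eq_square algebra_simps)
      have g2: "p^2 * ((1-p) * mu n (i+1)) \<le> (1-p)^2 * (p * mu n i)"
        using mult_left_mono[OF h2 q] by (simp add: power2_eq_square algebra_simps)
      show ?thesis using False a g1 g2 by simp
    qed
  qed
qed

lemma wrap: "(odd n \<longrightarrow> p * mu n 0 = (1-p) * mu n (2^n - 1)) \<and> (even n \<longrightarrow> mu n 0 = mu n (2^n - 1))"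
proof (induction n)
  case 0 then show ?case by simp
next
  case (Suc n)
  have a: "mu (Suc n) 0 = (if odd n then p else 1 - p) * mu n 0" using mu_L[of 0 n] by simp
  obtain k where k: "(2::nat)^n = Suc k" using not0_implies_Suc[of "(2::nat)^n"] by auto
  have e: "(2::nat)^Suc n - 1 = 2 * (2^n - 1) + 1" using k by simp
  have b: "mu (Suc n) (2^Suc n - 1) = (if odd n then 1 - p else p) * mu n (2^n - 1)"
    unfolding e by (rule mu_R) simp
  show ?case using Suc a b by (auto simp: algebra_simps)
qed

lemma adj_both: "j + 1 < 2^n \<Longrightarrow> p^2 * mu n (j+1) \<le> (1-p)^2 * mu n j \<and> p^2 * mu n j \<le> (1-p)^2 * mu n (j+1)"
proof -
  assume j: "j + 1 < 2^n"
  have pp: "p \<le> 1 - p" "0 < 1 - p" using p0 p1 by auto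
  have m: "mu n j \<ge> 0" "mu n (j+1) \<ge> 0" by (rule mu_nonneg)+
  have k1: "p^2 * x \<le> p * (1-p) * x" "p * (1-p) * x \<le> (1-p)^2 * x" if "x \<ge> 0" for x
    using that pp p0 by (auto simp: power2_eq_square intro!: mult_right_mono mult_left_mono)
  show ?thesis
  proof (cases "odd n")
    case True
    with adj_inner[OF j] have h: "p * mu n j \<le> (1-p) * mu n (j+1)" "p^2 * mu n (j+1) \<le> (1-p)^2 * mu n j" by auto
    have "p * (p * mu n j) \<le> p * ((1-p) * mu n (j+1))" using h(1) p0 by (intro mult_left_mono) auto
    then show ?thesis using h(2) k1[OF m(2)] by (simp add: power2_eq_square algebra_simps)
  next
    case False
    with adj_inner[OF j] have h: "p * mu n (j+1) \<le> (1-p) * mu n j" "p^2 * mu n j \<le> (1-p)^2 * mu n (j+1)" by auto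
    have "p * (p * mu n (j+1)) \<le> p * ((1-p) * mu n j)" using h(1) p0 by (intro mult_left_mono) auto
    then show ?thesis using h(2) k1[OF m(1)] by (simp add: power2_eq_square algebra_simps)
  qed
qed

lemma adj: assumes "j < 2^n"
  shows "p^2 * mu n ((j+1) mod 2^n) \<le> (1-p)^2 * mu n j \<and> p^2 * mu n j \<le> (1-p)^2 * mu n ((j+1) mod 2^n)"
proof (cases "j + 1 < 2^n")
  case True then show ?thesis using adj_both by simp
next
  case False
  then have j0: "j + 1 = 2^n" using assms by auto
  then have j: "j = 2^n - 1" "(j+1) mod 2^n = 0" by auto
  have pp: "p \<le> 1 - p" "0 < 1 - p" using p0 p1 by auto
  have m: "mu n 0 \<ge> 0" "mu n (2^n-1) \<ge> 0" by (rule mu_nonneg)+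
  have k1: "p^2 * x \<le> p * (1-p) * x" "p * (1-p) * x \<le> (1-p)^2 * x" "p * x \<le> (1-p) * x" if "x \<ge> 0" for x
    using that pp p0 by (auto simp: power2_eq_square intro!: mult_right_mono mult_left_mono)
  show ?thesis
  proof (cases "odd n")
    case True
    then have h: "p * mu n 0 = (1-p) * mu n (2^n - 1)" using wrap by auto
    have g1: "p^2 * mu n 0 = p * (1-p) * mu n (2^n - 1)" using h by (simp add: power2_eq_square)
    have g2: "(1-p)^2 * mu n 0 \<ge> (1-p) * (p * mu n 0)" using k1(3)[OF m(1)] pp
      by (simp add: power2_eq_square mult.assoc mult_left_mono)
    have g3: "(1-p) * (p * mu n 0) = (1-p)^2 * mu n (2^n - 1)" using h by (simp add: power2_eq_square)
    have "p^2 * mu n 0 \<le> (1-p)^2 * mu n (2^n - 1)" using g1 k1(2)[OF m(2)] by simp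
    moreover have "p^2 * mu n (2^n - 1) \<le> (1-p)^2 * mu n 0" using g2 g3 k1(1)[OF m(2)] k1(2)[OF m(2)] by simp
    ultimately show ?thesis using j by simp
  next
    case False
    then have h: "mu n 0 = mu n (2^n - 1)" using wrap by auto
    then show ?thesis using j k1[OF m(1)] k1[OF m(2)] h by (simp add: power2_eq_square algebra_simps)
  qed
qed

end
definition cd :: "real \<Rightarrow> real" where "cd x = \<bar>x - real_of_int (round x)\<bar>"

lemma cd_le: "cd x \<le> \<bar>x - real_of_int m\<bar>"
  unfolding cd_def by (rule round_diff_minimal)

lemma cd_nonneg: "cd x \<ge> 0" by (simp add: cd_def)

lemma cd_half: "cd x \<le> 1/2"
  unfolding cd_def using of_int_round_abs_le[of x] by (simp add: abs_minus_commute)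

lemma cd_add_int: "cd (x + real_of_int m) = cd x"
proof -
  have "cd (x + real_of_int m) \<le> \<bar>x + real_of_int m - real_of_int (round x + m)\<bar>" by (rule cd_le)
  also have "\<dots> = cd x" by (simp add: cd_def)
  finally have 1: "cd (x + real_of_int m) \<le> cd x" .
  have "cd x \<le> \<bar>x - real_of_int (round (x + real_of_int m) - m)\<bar>" by (rule cd_le)
  also have "\<dots> = cd (x + real_of_int m)" by (simp add: cd_def)
  finally show ?thesis using 1 by simp
qed

lemma cd_minus: "cd (- x) = cd x"
proof -
  have a: "cd (- y) \<le> cd y" for y
  proof -
    have "cd (- y) \<le> \<bar>- y - real_of_int (- round y)\<bar>" by (rule cd_le)
    also have "\<dots> = cd y" by (simp add: cd_def abs_minus_commute)
    finally show ?thesis .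
  qed
  show ?thesis using a[of x] a[of "-x"] by simp
qed

lemma cd_tri: "cd (x + y) \<le> cd x + cd y"
proof -
  have "cd (x + y) \<le> \<bar>x + y - real_of_int (round x + round y)\<bar>" by (rule cd_le)
  also have "\<dots> \<le> cd x + cd y" unfolding cd_def by (simp add: abs_triangle_ineq[THEN order_trans])
  finally show ?thesis .
qed

lemma cd_abs: "cd x \<le> \<bar>x\<bar>" using cd_le[of x 0] by simp

lemma cd_measurable[measurable]: "cd \<in> borel_measurable borel"
  unfolding cd_def[abs_def] round_def by measurable

lemma cos_lb: "(x::real) \<ge> 0 \<Longrightarrow> cos x \<ge> 1 - x^2/2"
proof -
  assume x: "x \<ge> 0"
  let ?f = "\<lambda>x::real. cos x - 1 + x^2/2"
  have "\<And>u::real. \<lbrakk>0 \<le> u; u \<le> x\<rbrakk> \<Longrightarrow> (?f has_real_derivative (- sin u + u)) (at u)"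
    by (auto intro!: derivative_eq_intros simp: field_simps)
  moreover have "\<And>u. \<lbrakk>0 \<le> u; u \<le> x\<rbrakk> \<Longrightarrow> - sin u + u \<ge> 0" using sin_x_le_x by auto
  ultimately have "?f x \<ge> ?f 0"
    by (intro DERIV_nonneg_imp_nondecreasing[OF x]) blast
  then show ?thesis by simp
qed

lemma sin_lb3: "(x::real) \<ge> 0 \<Longrightarrow> sin x \<ge> x - x^3/6"
proof -
  assume x: "x \<ge> 0"
  let ?f = "\<lambda>x::real. sin x - x + x^3/6"
  have "\<And>u::real. \<lbrakk>0 \<le> u; u \<le> x\<rbrakk> \<Longrightarrow> (?f has_real_derivative (cos u - 1 + u^2/2)) (at u)"
    by (auto intro!: derivative_eq_intros simp: field_simps power2_eq_square)
  moreover have "\<And>u. \<lbrakk>0 \<le> u; u \<le> x\<rbrakk> \<Longrightarrow> cos u - 1 + u^2/2 \<ge> 0" using cos_lb by fastforce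
  ultimately have "?f x \<ge> ?f 0"
    by (intro DERIV_nonneg_imp_nondecreasing[OF x]) blast
  then show ?thesis by simp
qed

lemma sin_lb: assumes "0 \<le> x" "x \<le> pi/2" shows "sin x \<ge> x/2"
proof -
  have "pi \<le> 3.2" using pi_approx by simp
  then have "x \<le> 1.6" using assms by simp
  then have "x * x \<le> 1.6 * 1.6" using assms by (intro mult_mono) auto
  then have "x * x \<le> 3" by simp
  then have "x * (x * x) \<le> x * 3" using assms by (intro mult_left_mono) auto
  then have "x^3/6 \<le> x / 2" by (simp add: power3_eq_cube)
  then show ?thesis using sin_lb3[OF assms(1)] by simp
qed

lemma sin_sq_cd: "(sin (pi * x))^2 \<ge> (cd x)^2"
proof -
  define n where "n = round x"
  define y where "y = x - real_of_int n"
  have y: "\<bar>y\<bar> \<le> 1/2" "cd x = \<bar>y\<bar>" unfolding y_def n_def cd_def using of_int_round_abs_le[of x] by (auto simp: abs_minus_commute)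
  have s0: "sin (real_of_int n * pi) = 0" using sin_times_pi_eq_0 by simp
  have "sin (pi * x) = sin (pi * y + real_of_int n * pi)" unfolding y_def by (simp add: algebra_simps)
  also have "\<dots> = sin (pi * y) * cos (real_of_int n * pi)" using s0 by (simp add: sin_add)
  finally have "(sin (pi * x))^2 = (sin (pi * y))^2 * (cos (real_of_int n * pi))^2" by (simp add: power_mult_distrib)
  also have "(cos (real_of_int n * pi))^2 = 1" using sin_cos_squared_add[of "real_of_int n * pi"] s0 by simp
  finally have e: "(sin (pi * x))^2 = (sin (pi * \<bar>y\<bar>))^2" by (cases "y \<ge> 0") auto
  have "sin (pi * \<bar>y\<bar>) \<ge> pi * \<bar>y\<bar> / 2" using y by (intro sin_lb) auto
  moreover have "2 * \<bar>y\<bar> \<le> pi * \<bar>y\<bar>" by (rule mult_right_mono) (use pi_gt3 in auto)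
  ultimately have "sin (pi * \<bar>y\<bar>) \<ge> \<bar>y\<bar>" by linarith
  then have "(sin (pi * \<bar>y\<bar>))^2 \<ge> \<bar>y\<bar>^2" by (intro power_mono) auto
  then show ?thesis using e y by simp
qed

lemma normsq: "(cmod (cis A - complex_of_real r * cis B))^2 = (1 - r)^2 + 4 * r * (sin ((A - B)/2))^2"
proof -
  have "(cmod (cis A - complex_of_real r * cis B))^2 = (cos A - r * cos B)^2 + (sin A - r * sin B)^2"
    by (simp add: cmod_power2)
  also have "\<dots> = ((cos A)^2 + (sin A)^2) + r^2 * ((cos B)^2 + (sin B)^2) - 2 * r * (cos A * cos B + sin A * sin B)"
    by algebra
  also have "\<dots> = 1 + r^2 - 2 * r * cos (A - B)" by (simp only: sin_cos_squared_add2 cos_diff)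
  also have "cos (A - B) = 1 - 2 * (sin ((A - B)/2))^2"
  proof -
    have "cos (A - B) = cos (2 * ((A-B)/2))" by (simp only: times_divide_eq_right nonzero_mult_div_cancel_left[of 2] zero_neq_numeral[symmetric] not_False_eq_True)
    also have "\<dots> = 1 - 2 * (sin ((A - B)/2))^2" by (rule cos_double_sin)
    finally show ?thesis .
  qed
  finally show ?thesis by (simp add: power2_eq_square algebra_simps)
qed
lemma dyadic_borel[measurable]: "dyadic n j \<in> sets borel"
  unfolding dyadic_def by simp

lemma jle: "j < 2^n \<Longrightarrow> real j + 1 \<le> 2^n"
proof -
  assume "j < 2^n"
  then have "j + 1 \<le> 2^n" by simp
  then have "real (j + 1) \<le> real (2^n)" by (simp only: of_nat_le_iff)
  then show ?thesis by simp
qed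

lemma dyadic_mem: "t \<in> dyadic n j \<longleftrightarrow> real j \<le> 2^n * t \<and> 2^n * t < real j + 1"
  unfolding dyadic_def by (auto simp: field_simps)

lemma dyadic_sub01: "j < 2^n \<Longrightarrow> dyadic n j \<subseteq> {0..<1}"
proof
  fix t assume j: "j < 2^n" and t: "t \<in> dyadic n j"
  have a: "real j + 1 \<le> 2^n" using jle[OF j] .
  have b: "real j \<le> 2^n * t" "2^n * t < real j + 1" using t unfolding dyadic_mem by auto
  have "0 \<le> 2^n * t" using b by linarith
  moreover have "t = (2^n * t) / 2^n" by simp
  ultimately have "0 \<le> t" by (metis divide_nonneg_pos zero_less_numeral zero_less_power)
  moreover have "2^n * t < 2^n * 1" using a b by linarith
  then have "t < 1" by (simp only: mult_less_cancel_left_pos zero_less_power zero_less_numeral)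
  ultimately show "t \<in> {0..<1}" by auto
qed

lemma floor_idx:
  assumes "0 \<le> t" "t < 1"
  shows "nat \<lfloor>2^n * t\<rfloor> < 2^n" "t \<in> dyadic n (nat \<lfloor>2^n * t\<rfloor>)"
proof -
  have a: "0 \<le> 2^n * t" "2^n * t < 2^n" using assms by auto
  then have f0: "0 \<le> \<lfloor>2^n * t\<rfloor>" by simp
  have "\<lfloor>2^n * t\<rfloor> < 2^n"
    using a(2) floor_less_iff[of "2^n * t" "2^n"] by simp
  then show "nat \<lfloor>2^n * t\<rfloor> < 2^n" using f0 by (simp add: nat_less_iff)
  have "real (nat \<lfloor>2^n * t\<rfloor>) = of_int \<lfloor>2^n * t\<rfloor>" using f0 by simp
  then show "t \<in> dyadic n (nat \<lfloor>2^n * t\<rfloor>)" unfolding dyadic_mem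
    using of_int_floor_le[of "2^n * t"] real_of_int_floor_add_one_gt[of "2^n * t"] by simp
qed

lemma div_bounds: "(j div 2^s) * 2^s \<le> j" "j + 1 \<le> (j div 2^s + 1) * (2::nat)^s"
proof -
  have e: "j = (j div 2^s) * 2^s + j mod 2^s" by (rule div_mult_mod_eq[symmetric])
  have "j mod 2^s < 2^s" by simp
  then have "j + 1 \<le> (j div 2^s) * 2^s + 2^s" using e by linarith
  then show "j + 1 \<le> (j div 2^s + 1) * (2::nat)^s" by (simp add: distrib_right)
  show "(j div 2^s) * 2^s \<le> j" using e by linarith
qed

lemma dyadic_parent: "dyadic (n+s) j \<subseteq> dyadic n (j div 2^s)"
proof
  fix t assume t: "t \<in> dyadic (n+s) j"
  have d1: "real (j div 2^s) * 2^s \<le> real j"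
    using of_nat_mono[OF div_bounds(1)[of j s], where 'a=real] by simp
  have d2: "real j + 1 \<le> (real (j div 2^s) + 1) * 2^s"
    using of_nat_mono[OF div_bounds(2)[of j s], where 'a=real] by (simp add: algebra_simps)
  have t1: "real j \<le> 2^(n+s) * t" "2^(n+s) * t < real j + 1" using t unfolding dyadic_mem by auto
  have e: "(2::real)^(n+s) * t = 2^s * (2^n * t)" by (simp add: power_add)
  have t2: "real j \<le> 2^s * (2^n * t)" "2^s * (2^n * t) < real j + 1" using t1 unfolding e by auto
  have d1': "2^s * real (j div 2^s) \<le> real j" using d1 by (simp add: mult.commute)
  have d2': "real j + 1 \<le> 2^s * (real (j div 2^s) + 1)" using d2 by (simp add: mult.commute)
  have "2^s * real (j div 2^s) \<le> 2^s * (2^n * t)" using d1' t2 by linarith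
  then have l: "real (j div 2^s) \<le> 2^n * t" using mult_le_cancel_left_pos[of "(2::real)^s"] by simp
  have "2^s * (2^n * t) < 2^s * (real (j div 2^s) + 1)" using d2' t2 by linarith
  then have r: "2^n * t < real (j div 2^s) + 1" using mult_less_cancel_left_pos[of "(2::real)^s"] by simp
  show "t \<in> dyadic n (j div 2^s)" unfolding dyadic_mem using l r by auto
qed

lemma arc_dyadic:
  assumes "j < 2^n"
  shows "arc (real j / 2^n) (1 / 2^n) = dyadic n j"
proof -
  have jj: "real j + 1 \<le> 2^n" using jle[OF assms] .
  have a1: "real j / 2^n + 1/2^n \<le> 1" using jj by (simp add: add_divide_distrib[symmetric] divide_le_eq_1)
  show ?thesis
  proof (intro set_eqI iffI)
    fix t assume t: "t \<in> arc (real j / 2^n) (1 / 2^n)"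
    then have t01: "0 \<le> t" "t < 1" and f: "frac (t - real j / 2^n) < 1 / 2^n" unfolding arc_def by auto
    show "t \<in> dyadic n j"
    proof (cases "t \<ge> real j / 2^n")
      case True
      have "0 \<le> real j / 2^n" by simp
      then have "0 \<le> t - real j / 2^n" "t - real j / 2^n < 1" using True t01 by linarith+
      then have "frac (t - real j / 2^n) = t - real j / 2^n" by (intro frac_eq[THEN iffD2]) auto
      then have "t < real j / 2^n + 1 / 2^n" using f by simp
      then show ?thesis using True unfolding dyadic_def by (simp add: add_divide_distrib)
    next
      case False
      have "frac (t - real j / 2^n) = t - real j / 2^n + 1"
      proof (subst frac_unique_iff, intro conjI)
        show "t - real j / 2 ^ n - (t - real j / 2 ^ n + 1) \<in> \<int>" by simp
        have pos: "0 < 1/(2::real)^n" by simp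
        show "0 \<le> t - real j / 2 ^ n + 1" using t01 False a1 pos by linarith
        show "t - real j / 2 ^ n + 1 < 1" using False by linarith
      qed
      then show ?thesis using f t01 a1 by simp
    qed
  next
    fix t assume t: "t \<in> dyadic n j"
    then have t01: "t \<in> {0..<1}" using dyadic_sub01[OF assms] by auto
    have tt: "real j / 2^n \<le> t" "t < real j / 2^n + 1 / 2^n" using t unfolding dyadic_def by (auto simp: add_divide_distrib)
    have "0 \<le> real j / 2^n" by simp
    then have "0 \<le> t - real j / 2^n" "t - real j / 2^n < 1" using tt a1 by linarith+
    then have "frac (t - real j / 2^n) = t - real j / 2^n"
      by (intro frac_eq[THEN iffD2]) auto
    then show "t \<in> arc (real j / 2^n) (1 / 2^n)" using t01 tt unfolding arc_def by auto
  qed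
qed
lemma int_three:
  fixes T X N m :: int
  assumes "0 \<le> T" "T < N" "0 \<le> X" "X < N" "m = -1 \<or> m = 0 \<or> m = 1"
    "-2 < T - X - N*m" "T - X - N*m < 2"
  shows "T = X \<or> T = (X+1) mod N \<or> T = (X+N-1) mod N"
proof -
  consider "m = -1" | "m = 0" | "m = 1" using assms(5) by auto
  then show ?thesis
  proof cases
    case 1
    then have "T = X - N + 1" "X = N - 1" using assms by auto
    moreover have "(X + 1) mod N = 0" using \<open>X = N - 1\<close> by simp
    ultimately show ?thesis by simp
  next
    case 2
    then have e: "T = X \<or> T = X + 1 \<or> T = X - 1" using assms by auto
    show ?thesis
    proof (cases "T = X + 1")
      case True
      then have "(X + 1) mod N = X + 1" using assms by (intro mod_pos_pos_trivial) auto
      then show ?thesis using True by simp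
    next
      case False
      show ?thesis
      proof (cases "T = X - 1")
        case True
        have "(X + N - 1) mod N = (X - 1 + N) mod N" by (simp add: algebra_simps)
        also have "\<dots> = (X - 1) mod N" by simp
        also have "\<dots> = X - 1" using assms True by (intro mod_pos_pos_trivial) auto
        finally show ?thesis using True by simp
      qed (use e False in auto)
    qed
  next
    case 3
    then have "T = X + N - 1" "X = 0" using assms by auto
    moreover have "(X + N - 1) mod N = N - 1" using \<open>X = 0\<close> assms mod_pos_pos_trivial[of "N - 1" N] by simp
    ultimately show ?thesis by simp
  qed
qed

lemma three:
  assumes t: "0 \<le> t" "t < 1" and x: "0 \<le> x0" "x0 < 1" and c: "cd (t - x0) < 1/2^g"
  shows "t \<in> dyadic g (nat \<lfloor>2^g * x0\<rfloor>) \<union> dyadic g ((nat \<lfloor>2^g * x0\<rfloor> + 1) mod 2^g)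
           \<union> dyadic g ((nat \<lfloor>2^g * x0\<rfloor> + 2^g - 1) mod 2^g)"
proof -
  define X where "X = nat \<lfloor>2^g * x0\<rfloor>"
  define T where "T = nat \<lfloor>2^g * t\<rfloor>"
  define m where "m = round (t - x0)"
  have tT: "t \<in> dyadic g T" unfolding T_def using floor_idx[OF t] by simp
  have Xl: "X < 2^g" and Tl: "T < 2^g" unfolding X_def T_def using floor_idx[OF t] floor_idx[OF x] by auto
  have Xr: "real X \<le> 2^g * x0" "2^g * x0 < real X + 1" using floor_idx(2)[OF x, of g] unfolding X_def dyadic_mem by auto
  have Tr: "real T \<le> 2^g * t" "2^g * t < real T + 1" using tT unfolding dyadic_mem by auto
  have cm: "\<bar>t - x0 - real_of_int m\<bar> < 1/2^g" using c unfolding cd_def m_def by simp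
  have N1: "(1::real) \<le> 2^g" by simp
  have "1/(2::real)^g \<le> 1" by simp
  then have "\<bar>t - x0 - real_of_int m\<bar> < 1" using cm by linarith
  then have "-2 < real_of_int m" "real_of_int m < 2" using t x by (auto simp: abs_less_iff)
  then have mm: "m = -1 \<or> m = 0 \<or> m = 1" by linarith
  have "2^g * \<bar>t - x0 - real_of_int m\<bar> < 2^g * (1/2^g)" using cm by (intro mult_strict_left_mono) auto
  moreover have "2^g * \<bar>t - x0 - real_of_int m\<bar> = \<bar>2^g * t - 2^g * x0 - 2^g * real_of_int m\<bar>"
  proof -
    have "\<bar>(2::real)^g * (t - x0 - real_of_int m)\<bar> = 2^g * \<bar>t - x0 - real_of_int m\<bar>" by (simp only: abs_mult) simp
    moreover have "(2::real)^g * (t - x0 - real_of_int m) = 2^g * t - 2^g * x0 - 2^g * real_of_int m" by (simp only: right_diff_distrib)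
    ultimately show ?thesis by simp
  qed
  ultimately have "\<bar>2^g * t - 2^g * x0 - 2^g * real_of_int m\<bar> < 1" by simp
  then have b: "-2 < real T - real X - 2^g * real_of_int m" "real T - real X - 2^g * real_of_int m < 2"
    using Xr Tr by (auto simp: abs_less_iff)
  have b2: "-2 < int T - int X - 2^g * m" "int T - int X - 2^g * m < 2"
  proof -
    have "real_of_int (int T - int X - 2^g * m) = real T - real X - 2^g * real_of_int m" by simp
    then show "-2 < int T - int X - 2^g * m" "int T - int X - 2^g * m < 2" using b by linarith+
  qed
  have Xl': "int X < 2^g" "int T < 2^g" using Xl Tl by (simp_all add: of_nat_less_iff[symmetric])
  have r: "int T = int X \<or> int T = (int X + 1) mod 2^g \<or> int T = (int X + 2^g - 1) mod 2^g"
    using int_three[of "int T" "2^g" "int X" m] Xl' mm b2 by auto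
  have e1: "int ((X + 1) mod 2^g) = (int X + 1) mod 2^g" by (simp add: of_nat_mod add.commute)
  have e2: "int ((X + 2^g - 1) mod 2^g) = (int X + 2^g - 1) mod 2^g"
  proof -
    have "(1::nat) \<le> X + 2^g" by (simp add: add_increasing)
    then have "int (X + 2^g - 1) = int (X + 2^g) - int 1" by (rule of_nat_diff)
    then have "int (X + 2^g - 1) = int X + 2^g - 1" by simp
    then show ?thesis by (simp add: of_nat_mod)
  qed
  have "T = X \<or> T = (X + 1) mod 2^g \<or> T = (X + 2^g - 1) mod 2^g"
    using r e1 e2 by (metis of_nat_eq_iff)
  then show ?thesis using tT unfolding X_def[symmetric] by auto
qed
context sig begin

lemma fm: "finite_measure M" using prob by (simp add: prob_space_def)

lemma sets_borelI: "A \<in> sets borel \<Longrightarrow> A \<in> sets M" using sets_M by simp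

lemma mmono: "A \<subseteq> B \<Longrightarrow> B \<in> sets borel \<Longrightarrow> measure M A \<le> measure M B"
  using finite_measure.finite_measure_mono[OF fm] sets_borelI by blast

lemma mle1: "measure M A \<le> 1"
  using prob_space.prob_le_1[OF prob] by simp

lemma mrestrict: assumes "A \<in> sets borel" shows "measure M A \<le> measure M (A \<inter> {0..<1})"
proof -
  have s: "A \<inter> {0..<1} \<in> sets M" "A - {0..<1} \<in> sets M" "{0..<1::real} \<in> sets M"
    using assms unfolding sets_M by auto
  have "measure M A \<le> measure M (A \<inter> {0..<1}) + measure M (A - {0..<1})"
    using measure_Un_le[OF s(1,2)] by (simp add: Int_Diff_Un)
  moreover have "measure M (A - {0..<1}) \<le> measure M (space M - {0..<1})"
    using s space_M by (intro finite_measure.finite_measure_mono[OF fm]) (auto simp: sets_M)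
  moreover have "measure M (space M - {0..<1}) = 0"
    using finite_measure.finite_measure_compl[OF fm s(3)] meas01 prob_space.prob_space[OF prob] by simp
  ultimately show ?thesis by simp
qed

definition K :: real where "K = (1-p)^2 / p^2"

lemma K_nonneg: "K \<ge> 0" unfolding K_def by simp

lemma nb_right: "X < 2^g \<Longrightarrow> mu g ((X+1) mod 2^g) \<le> K * mu g X"
proof -
  assume "X < 2^g"
  then have "p^2 * mu g ((X+1) mod 2^g) \<le> (1-p)^2 * mu g X" using adj by blast
  then show ?thesis unfolding K_def using p0 by (simp add: field_simps)
qed

lemma nb_left: "X < 2^g \<Longrightarrow> mu g ((X + 2^g - 1) mod 2^g) \<le> K * mu g X"
proof -
  assume X: "X < 2^g"
  define Y where "Y = (X + 2^g - 1) mod 2^g"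
  have Y: "Y < 2^g" unfolding Y_def by simp
  have "(Y + 1) mod 2^g = (X + 2^g - 1 + 1) mod 2^g" unfolding Y_def by (simp add: mod_Suc_eq)
  also have "X + 2^g - 1 + 1 = X + 2^g" by (simp add: Suc_leI)
  also have "(X + 2^g) mod 2^g = X" using X by simp
  finally have "(Y + 1) mod 2^g = X" .
  then have "p^2 * mu g Y \<le> (1-p)^2 * mu g X" using adj[OF Y] by metis
  then show ?thesis unfolding K_def Y_def using p0 by (simp add: field_simps)
qed

lemma Bset_borel: "{t. cd (t - th) < r} \<in> sets borel"
  by measurable

lemma Bk_bound:
  assumes J: "J < 2^G" and x0: "x0 = real J / 2^G" and cx: "cd (x0 - th) \<le> l/2"
    and l: "0 < l" "l < 4/2^G"
  shows "p^(k+3) * measure M {t. cd (t - th) < 2^k * l} \<le> (1 + 2*K) * mu G J"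
proof (cases "k + 3 \<le> G")
  case True
  define g where "g = G - (k+3)"
  have G: "G = g + (k+3)" unfolding g_def using True by simp
  define X where "X = nat \<lfloor>2^g * x0\<rfloor>"
  have x0e: "2^g * x0 = real J / 2^(k+3)" unfolding x0 G by (simp add: power_add)
  have Xe: "X = J div 2^(k+3)" unfolding X_def x0e
    using floor_divide_of_nat_eq[of J "2^(k+3)", where 'a=real] by simp
  have x01: "0 \<le> x0" "x0 < 1" using dyadic_sub01[OF J] unfolding x0 dyadic_def
    using jle[OF J] J by (auto simp: field_simps)
  have XL: "X < 2^g" unfolding X_def using floor_idx[OF x01] by simp
  let ?B = "{t. cd (t - th) < 2^k * l}"
  have sub: "?B \<inter> {0..<1} \<subseteq> dyadic g X \<union> dyadic g ((X+1) mod 2^g) \<union> dyadic g ((X + 2^g - 1) mod 2^g)"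
  proof
    fix t assume t: "t \<in> ?B \<inter> {0..<1}"
    have "cd (t - x0) \<le> cd (t - th) + cd (th - x0)" using cd_tri[of "t - th" "th - x0"] by simp
    also have "cd (th - x0) = cd (x0 - th)" using cd_minus[of "x0 - th"] by simp
    finally have "cd (t - x0) < 2^k * l + l/2" using t cx by auto
    also have "\<dots> \<le> 2^(k+1) * l"
    proof -
      have "1 * l \<le> 2^k * l" using l by (intro mult_right_mono) auto
      then have "l \<le> 2^k * l" by simp
      moreover have "(2::real)^(k+1) * l = 2 * (2^k * l)" by simp
      ultimately show ?thesis using l by linarith
    qed
    also have "\<dots> < 2^(k+1) * (4/2^G)" using l by (intro mult_strict_left_mono) auto
    also have "\<dots> = 1/2^g" unfolding G by (simp add: power_add field_simps)
    finally show "t \<in> dyadic g X \<union> dyadic g ((X+1) mod 2^g) \<union> dyadic g ((X + 2^g - 1) mod 2^g)"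
      using three[of t x0 g] t x01 unfolding X_def by auto
  qed
  have "measure M ?B \<le> measure M (?B \<inter> {0..<1})" by (rule mrestrict[OF Bset_borel])
  also have "\<dots> \<le> measure M (dyadic g X \<union> dyadic g ((X+1) mod 2^g) \<union> dyadic g ((X + 2^g - 1) mod 2^g))"
    by (rule mmono[OF sub]) simp
  also have "\<dots> \<le> mu g X + mu g ((X+1) mod 2^g) + mu g ((X + 2^g - 1) mod 2^g)"
  proof -
    have s: "dyadic g X \<in> sets M" "dyadic g ((X+1) mod 2^g) \<in> sets M" "dyadic g ((X + 2^g - 1) mod 2^g) \<in> sets M"
      unfolding sets_M by auto
    have "measure M (dyadic g X \<union> dyadic g ((X+1) mod 2^g) \<union> dyadic g ((X + 2^g - 1) mod 2^g))
      \<le> measure M (dyadic g X \<union> dyadic g ((X+1) mod 2^g)) + measure M (dyadic g ((X + 2^g - 1) mod 2^g))"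
      using s by (intro measure_Un_le) auto
    moreover have "measure M (dyadic g X \<union> dyadic g ((X+1) mod 2^g)) \<le> measure M (dyadic g X) + measure M (dyadic g ((X+1) mod 2^g))"
      using s by (intro measure_Un_le) auto
    ultimately show ?thesis unfolding mu_def by linarith
  qed
  also have "\<dots> \<le> (1 + 2*K) * mu g X" using nb_left[OF XL] nb_right[OF XL] by (simp add: algebra_simps)
  finally have m: "measure M ?B \<le> (1 + 2*K) * mu g X" .
  have a: "p^(k+3) * mu g X \<le> mu G J" using anc_ge[of J g "k+3"] J unfolding G Xe by simp
  have "p^(k+3) * measure M ?B \<le> p^(k+3) * ((1 + 2*K) * mu g X)"
    using m p0 by (intro mult_left_mono) auto
  also have "\<dots> = (1 + 2*K) * (p^(k+3) * mu g X)" by simp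
  also have "\<dots> \<le> (1 + 2*K) * mu G J" using a K_nonneg by (intro mult_left_mono) auto
  finally show ?thesis .
next
  case False
  have "p^(k+3) * measure M {t. cd (t - th) < 2^k * l} \<le> p^(k+3) * 1"
    using mle1 p0 by (intro mult_left_mono) auto
  also have "\<dots> \<le> p^G" using power_decreasing[of G "k+3" p] False p0 p1 by simp
  also have "\<dots> \<le> mu G J" using mu_ge[OF J] .
  also have "\<dots> \<le> (1 + 2*K) * mu G J" using K_nonneg mu_nonneg[of G J] by (simp add: algebra_simps)
  finally show ?thesis .
qed

end
definition PK :: "real \<Rightarrow> real \<Rightarrow> real \<Rightarrow> real" where
  "PK l th t = l * (2 - l) / (l^2 + 4 * (1 - l) * (sin (pi * (t - th)))^2)"

lemma PK_measurable[measurable]: "PK l th \<in> borel_measurable borel"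
  unfolding PK_def[abs_def] by measurable

lemma pk_eq:
  shows "(1 - (cmod (zarc a l))^2) / (cmod (cis (2*pi*t) - zarc a l))^2 = PK l (a + l/2) t"
proof -
  have z: "zarc a l = complex_of_real (1-l) * cis (2*pi*(a + l/2))" by (simp add: zarc_def)
  have n: "(cmod (zarc a l))^2 = (1-l)^2" unfolding z norm_mult norm_of_real norm_cis by (simp add: power2_abs)
  have d: "(cmod (cis (2*pi*t) - zarc a l))^2 = (1-(1-l))^2 + 4*(1-l)*(sin((2*pi*t - 2*pi*(a+l/2))/2))^2"
    unfolding z by (rule normsq)
  have e: "(2*pi*t - 2*pi*(a+l/2))/2 = pi*(t - (a + l/2))" by (simp add: field_simps)
  have f: "1 - (1-l)^2 = l*(2-l)" by (simp add: power2_eq_square algebra_simps)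
  show ?thesis unfolding n d e f PK_def by simp
qed

lemma pk_den_pos: "0 < l \<Longrightarrow> l \<le> 1 \<Longrightarrow> l^2 \<le> l^2 + 4 * (1 - l) * (sin (pi * (t - th)))^2"
  by simp

lemma pk_nonneg: "0 < l \<Longrightarrow> l \<le> 1 \<Longrightarrow> PK l th t \<ge> 0"
  unfolding PK_def by (intro divide_nonneg_nonneg) auto

lemma pk_le1: assumes "0 < l" "l \<le> 1" shows "PK l th t \<le> 2 / l"
proof -
  have D: "l^2 \<le> l^2 + 4 * (1 - l) * (sin (pi * (t - th)))^2" using assms by simp
  have l2: "0 < l^2" using assms by simp
  have D0: "0 < l^2 + 4 * (1 - l) * (sin (pi * (t - th)))^2" using D l2 by linarith
  have "0 < (l^2 + 4 * (1 - l) * (sin (pi * (t - th)))^2) * l^2" using mult_pos_pos[OF D0 l2] .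
  then have "PK l th t \<le> l * (2 - l) / l^2" unfolding PK_def
    using assms D by (intro divide_left_mono) auto
  also have "\<dots> = (2 - l) / l" using assms by (simp add: power2_eq_square)
  also have "\<dots> \<le> 2 / l" using assms by (intro divide_right_mono) auto
  finally show ?thesis .
qed

lemma pk_le2: assumes "0 < l" "l \<le> 1/2" "0 < cd (t - th)" shows "PK l th t \<le> l / (cd (t - th))^2"
proof -
  let ?d = "cd (t - th)"
  have s: "(sin (pi * (t - th)))^2 \<ge> ?d^2" by (rule sin_sq_cd)
  have "2 * ?d^2 \<le> 4 * (1 - l) * (sin (pi * (t - th)))^2"
  proof -
    have "2 * ?d^2 \<le> 2 * (sin (pi * (t - th)))^2" using s by simp
    also have "\<dots> \<le> (4 * (1 - l)) * (sin (pi * (t - th)))^2" using assms by (intro mult_right_mono) auto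
    finally show ?thesis by simp
  qed
  then have D: "2 * ?d^2 \<le> l^2 + 4 * (1 - l) * (sin (pi * (t - th)))^2" by (smt (verit) zero_le_power2)
  have dp: "0 < 2 * ?d^2" using assms by simp
  have "PK l th t \<le> (2 * l) / (2 * ?d^2)" unfolding PK_def
    using assms D dp by (intro frac_le) (auto simp: mult_nonneg_nonneg)
  also have "\<dots> = l / ?d^2" by simp
  finally show ?thesis .
qed

lemma pk_ge: assumes "0 < l" "l \<le> 1" shows "PK l th t \<ge> l / (l^2 + 4 * pi^2 * (t - th)^2)"
proof -
  have s: "(sin (pi * (t - th)))^2 \<le> (pi * (t - th))^2"
    using abs_sin_x_le_abs_x[of "pi * (t - th)"] by (metis abs_ge_zero power2_abs power_mono)
  have "4 * (1 - l) * (sin (pi * (t - th)))^2 \<le> 4 * (sin (pi * (t - th)))^2"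
    using assms by (intro mult_right_mono) auto
  also have "\<dots> \<le> 4 * (pi * (t - th))^2" using s by simp
  finally have D: "l^2 + 4 * (1 - l) * (sin (pi * (t - th)))^2 \<le> l^2 + 4 * pi^2 * (t - th)^2"
    by (simp add: power_mult_distrib)
  have Dp: "0 < l^2 + 4 * (1 - l) * (sin (pi * (t - th)))^2" using assms
    by (smt (verit) mult_nonneg_nonneg zero_le_power2 zero_less_power)
  have "l / (l^2 + 4 * pi^2 * (t - th)^2) \<le> l * (2 - l) / (l^2 + 4 * (1 - l) * (sin (pi * (t - th)))^2)"
    using assms D Dp by (intro frac_le) auto
  then show ?thesis unfolding PK_def .
qed
lemma arc_borel: "arc a l \<in> sets borel"
proof -
  have "arc a l = {0..<1} \<inter> {t. t - a - real_of_int \<lfloor>t - a\<rfloor> < l}"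
    unfolding arc_def frac_def by auto
  also have "\<dots> \<in> sets borel" by measurable
  finally show ?thesis .
qed

lemma find_G: fixes l :: real assumes "0 < l" "l \<le> 1" shows "\<exists>G. 2/2^G \<le> l \<and> l < 4/2^G"
proof -
  obtain n where n: "2/l < 2^n" using real_arch_pow[of 2 "2/l"] by auto
  then have S: "2/2^n \<le> l" using assms by (simp add: field_simps)
  define G where "G = (LEAST G. 2/(2::real)^G \<le> l)"
  have G1: "2/2^G \<le> l" unfolding G_def using S by (rule LeastI)
  have G0: "G \<noteq> 0"
  proof
    assume "G = 0"
    then show False using G1 assms by simp
  qed
  then obtain H where H: "G = Suc H" by (cases G) auto
  have "\<not> 2/(2::real)^H \<le> l" using not_less_Least[of H "\<lambda>G. 2/(2::real)^G \<le> l"] H unfolding G_def by auto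
  then have "l < 2/2^H" by simp
  also have "2/(2::real)^H = 4/2^G" unfolding H by simp
  finally show ?thesis using G1 by auto
qed

lemma find_J:
  assumes l: "0 < l" "l \<le> 1" and G: "2/2^G \<le> l"
  shows "\<exists>J. J < 2^G \<and> cd (real J / 2^G - (a + l/2)) \<le> l/2 \<and> dyadic G J \<subseteq> arc a l"
proof -
  define h :: real where "h = 1/2^G"
  have h: "0 < h" "2 * h \<le> l" using G unfolding h_def by auto
  define a' where "a' = frac a"
  have a': "0 \<le> a'" "a' < 1" "a' = a - real_of_int \<lfloor>a\<rfloor>" unfolding a'_def
    by (rule frac_ge_0, rule frac_lt_1, simp add: frac_def)
  define c where "c = \<lceil>2^G * a'\<rceil>"
  have "0 \<le> 2^G * a'" using a'(1) by simp
  then have c0: "0 \<le> c" unfolding c_def by linarith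
  have c1: "real_of_int c < 2^G * a' + 1" "2^G * a' \<le> real_of_int c" unfolding c_def
    using ceiling_correct[of "2^G * a'"] by linarith+
  have cle: "c \<le> 2^G"
  proof -
    have "2^G * a' \<le> 2^G" using a' by simp
    then have "\<lceil>2^G * a'\<rceil> \<le> \<lceil>(2::real)^G\<rceil>" by (rule ceiling_mono)
    then show ?thesis unfolding c_def by simp
  qed
  define y where "y = real_of_int c / 2^G"
  have ye: "y - a' = (real_of_int c - 2^G * a') / 2^G" unfolding y_def by (simp add: field_simps)
  have y: "0 \<le> y - a'" "y - a' < h" unfolding ye h_def using c1
    by (simp, intro divide_strict_right_mono) auto
  obtain J :: nat and s :: int where J: "J < 2^G" "real J / 2^G = y - real_of_int s" "s = 0 \<or> s = 1"
  proof (cases "c < 2^G")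
    case True
    show ?thesis
    proof (rule that[of "nat c" 0])
      show "nat c < 2^G" using True c0 by (simp add: nat_less_iff)
      show "real (nat c) / 2^G = y - real_of_int 0" unfolding y_def using c0 by simp
    qed simp
  next
    case False
    then have "c = 2^G" using cle by simp
    then have "y = 1" unfolding y_def by simp
    then show ?thesis by (intro that[of 0 1]) auto
  qed
  define x0 where "x0 = real J / 2^G"
  have cdb: "cd (x0 - (a + l/2)) \<le> l/2"
  proof -
    have "cd (x0 - (a + l/2)) \<le> \<bar>x0 - (a + l/2) - real_of_int (- \<lfloor>a\<rfloor> - s)\<bar>" by (rule cd_le)
    also have "x0 - (a + l/2) - real_of_int (- \<lfloor>a\<rfloor> - s) = (y - a') - l/2"
      unfolding x0_def J(2) a'(3) by simp
    also have "\<bar>(y - a') - l/2\<bar> \<le> l/2" using y h by (simp add: abs_le_iff)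
    finally show ?thesis .
  qed
  have sub: "dyadic G J \<subseteq> arc a l"
  proof
    fix t assume t: "t \<in> dyadic G J"
    have t01: "t \<in> {0..<1}" using dyadic_sub01[OF J(1)] t by auto
    have tx: "x0 \<le> t" "t < x0 + h" using t unfolding dyadic_def x0_def h_def by (auto simp: add_divide_distrib)
    have "frac (t - a) = (t - x0) + (y - a')"
    proof (subst frac_unique_iff, intro conjI)
      have "t - a - ((t - x0) + (y - a')) = real_of_int (- s - \<lfloor>a\<rfloor>)"
        unfolding x0_def J(2) a'(3) by simp
      then show "t - a - ((t - x0) + (y - a')) \<in> \<int>" by (metis Ints_of_int)
      show "0 \<le> (t - x0) + (y - a')" using tx y by linarith
      show "(t - x0) + (y - a') < 1" using tx y h l by linarith
    qed
    moreover have "(t - x0) + (y - a') < l" using tx y h by linarith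
    ultimately show "t \<in> arc a l" using t01 unfolding arc_def by auto
  qed
  show ?thesis using J(1) cdb sub unfolding x0_def by blast
qed
context sig begin

lemma PK_borel_M: "PK l th \<in> borel_measurable M"
  by (subst measurable_cong_sets[OF sets_M refl]) (rule PK_measurable)

lemma PK_int: assumes "0 < l" "l \<le> 1" shows "integrable M (PK l th)"
proof (rule finite_measure.integrable_const_bound[OF fm, where B = "2/l"])
  show "AE x in M. norm (PK l th x) \<le> 2 / l"
    using pk_nonneg[OF assms] pk_le1[OF assms] by (intro AE_I2) simp
qed (rule PK_borel_M)

lemma poisson_PK: "poisson M (zarc a l) = (\<integral>t. PK l (a + l/2) t \<partial>M)"
  unfolding poisson_def pk_eq ..

lemma pointwise:
  assumes l: "0 < l" "l \<le> 1" and N: "1/2 < 2^N * l"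
  shows "PK l th t \<le> (\<Sum>k<Suc N. 4/(4^k*l) * indicator {t. cd (t - th) < 2^k*l} t)"
proof -
  let ?f = "\<lambda>k. 4/(4^k*l) * indicator {t. cd (t - th) < 2^k*l} t"
  have fnn: "\<And>k. 0 \<le> ?f k" using l by simp
  define d where "d = cd (t - th)"
  have "\<exists>k \<le> N. PK l th t \<le> ?f k"
  proof (cases "d < l")
    case True
    then have "?f 0 = 4/l" unfolding d_def by (simp add: indicator_def)
    moreover have "PK l th t \<le> 2/l" by (rule pk_le1[OF l])
    moreover have "2/l \<le> 4/l" using l by (intro divide_right_mono) auto
    ultimately show ?thesis by (intro exI[of _ 0]) auto
  next
    case False
    have ex: "d < 2^N * l" using cd_half[of "t - th"] N unfolding d_def by linarith
    define k0 where "k0 = (LEAST k. d < 2^k*l)"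
    have k0: "d < 2^k0 * l" unfolding k0_def using LeastI[of "\<lambda>k. d < 2^k*l" N] ex by blast
    have k0N: "k0 \<le> N" unfolding k0_def using Least_le[of "\<lambda>k. d < 2^k*l" N] ex by blast
    have "k0 \<noteq> 0" using False k0 by (cases "k0 = 0") auto
    then obtain k1 where k1: "k0 = Suc k1" by (cases k0) auto
    have "\<not> d < 2^k1 * l" using not_less_Least[of k1 "\<lambda>k. d < 2^k*l"] k1 unfolding k0_def by simp
    then have db: "2^k1 * l \<le> d" by simp
    have "1 * l \<le> 2^k1 * l" using l by (intro mult_right_mono) auto
    then have ll: "l \<le> 2^k1 * l" by simp
    have l2: "l \<le> 1/2" using ll db cd_half[of "t - th"] unfolding d_def by linarith
    have dpos: "0 < d" using ll db l by linarith
    have "PK l th t \<le> l / d^2" unfolding d_def using pk_le2[OF l(1) l2] dpos unfolding d_def by simp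
    also have "\<dots> \<le> l / (2^k1 * l)^2"
    proof (rule divide_left_mono)
      show "(2^k1 * l)^2 \<le> d^2" using db l by (intro power_mono) auto
      show "0 \<le> l" using l by simp
      show "0 < d^2 * (2^k1 * l)^2" using dpos l by simp
    qed
    also have "\<dots> = 4/(4^k0 * l)"
    proof -
      have e4: "(2::real)^k1 * 2^k1 = 4^k1" by (metis power_mult_distrib numeral_times_numeral semiring_norm(12) semiring_norm(13))
      have "(2^k1 * l)^2 = 4^k1 * (l*l)" by (simp add: power2_eq_square e4[symmetric] algebra_simps)
      then have "l / (2^k1 * l)^2 = 1 / (4^k1 * l)" using l by (simp add: field_simps)
      also have "\<dots> = 4/(4^k0 * l)" unfolding k1 by simp
      finally show ?thesis .
    qed
    also have "\<dots> = ?f k0" using k0 unfolding d_def by (simp add: indicator_def)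
    finally show ?thesis using k0N by blast
  qed
  then obtain k where k: "k \<le> N" "PK l th t \<le> ?f k" by blast
  have "?f k \<le> (\<Sum>k<Suc N. ?f k)" by (rule member_le_sum) (use k fnn in auto)
  then show ?thesis using k by linarith
qed

end
context sig begin

definition Cst :: real where "Cst = 4 * (1 + 2*K) / (p^3 * (1 - 1/(4*p)))"

lemma upper_one:
  assumes p4: "1/4 < p" and l: "0 < l" "l \<le> 1"
  shows "poisson M (zarc a l) \<le> Cst * (measure M (arc a l) / l)"
proof -
  obtain G where G: "2/2^G \<le> l" "l < 4/2^G" using find_G[OF l] by blast
  obtain J where J: "J < 2^G" "cd (real J / 2^G - (a + l/2)) \<le> l/2" "dyadic G J \<subseteq> arc a l"
    using find_J[OF l G(1)] by blast
  obtain N where N0: "1/(2*l) < 2^N" using real_arch_pow[of 2 "1/(2*l)"] by auto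
  have N: "1/2 < 2^N * l" using N0 l by (simp add: field_simps)
  define th where "th = a + l/2"
  define B where "B = (\<lambda>k::nat. {t. cd (t - th) < 2^k*l})"
  have Bs: "B k \<in> sets M" for k unfolding B_def using Bset_borel sets_M by simp
  define mu0 where "mu0 = mu G J"
  have mu0: "mu0 \<le> measure M (arc a l)" unfolding mu0_def mu_def using J(3) arc_borel by (rule mmono)
  have Bk: "p^(k+3) * measure M (B k) \<le> (1 + 2*K) * mu0" for k
    unfolding B_def mu0_def using Bk_bound[OF J(1) refl _ l(1) G(2)] J(2) unfolding th_def by blast
  let ?g = "\<lambda>t. (\<Sum>k<Suc N. 4/(4^k*l) * indicator (B k) t)"
  have intk: "integrable M (\<lambda>t. 4/(4^k*l) * indicator (B k) t)" for k
  proof (rule integrable_mult_right)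
    show "integrable M (indicator (B k) :: real \<Rightarrow> real)"
      using Bs[of k] finite_measure.emeasure_finite[OF fm, of "B k"] by (simp add: less_top)
  qed
  have int_g: "integrable M ?g" by (rule Bochner_Integration.integrable_sum) (rule intk)
  have "poisson M (zarc a l) = (\<integral>t. PK l th t \<partial>M)" unfolding poisson_PK th_def ..
  also have "\<dots> \<le> (\<integral>t. ?g t \<partial>M)"
    using PK_int[OF l] int_g pointwise[OF l N] unfolding B_def by (intro integral_mono) auto
  also have "\<dots> = (\<Sum>k<Suc N. 4/(4^k*l) * measure M (B k))"
    using intk Bs space_M by (subst Bochner_Integration.integral_sum) auto
  also have "\<dots> \<le> (\<Sum>k<Suc N. (4 * (1 + 2*K) * mu0 / (l * p^3)) * (1/(4*p))^k)"
  proof (rule sum_mono)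
    fix k assume "k \<in> {..<Suc N}"
    have pk: "0 < p^(k+3)" using p0 by simp
    have m: "measure M (B k) \<le> (1 + 2*K) * mu0 / p^(k+3)" using Bk[of k] pk by (simp add: field_simps)
    have "4/(4^k*l) * measure M (B k) \<le> 4/(4^k*l) * ((1 + 2*K) * mu0 / p^(k+3))"
      using m l by (intro mult_left_mono) auto
    also have "\<dots> = (4 * (1 + 2*K) * mu0 / (l * p^3)) * (1/(4*p))^k"
      using p0 l by (simp add: field_simps power_add power_mult_distrib)
    finally show "4/(4^k*l) * measure M (B k) \<le> (4 * (1 + 2*K) * mu0 / (l * p^3)) * (1/(4*p))^k" .
  qed
  also have "\<dots> = (4 * (1 + 2*K) * mu0 / (l * p^3)) * (\<Sum>k<Suc N. (1/(4*p))^k)"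
    by (rule sum_distrib_left[symmetric])
  also have "\<dots> \<le> (4 * (1 + 2*K) * mu0 / (l * p^3)) * (1 / (1 - 1/(4*p)))"
  proof (rule mult_left_mono)
    have q: "0 < 1/(4*p)" "1/(4*p) < 1" using p0 p4 by (auto simp: field_simps)
    have "(\<Sum>k<Suc N. (1/(4*p))^k) = (1 - (1/(4*p))^Suc N) / (1 - 1/(4*p))"
      using q by (subst sum_gp_strict) auto
    also have "\<dots> \<le> 1 / (1 - 1/(4*p))" using q by (intro divide_right_mono) auto
    finally show "(\<Sum>k<Suc N. (1/(4*p))^k) \<le> 1 / (1 - 1/(4*p))" .
    show "0 \<le> 4 * (1 + 2*K) * mu0 / (l * p^3)" using K_nonneg mu_nonneg l p0 unfolding mu0_def by simp
  qed
  also have "\<dots> = Cst * (mu0 / l)" unfolding Cst_def by (simp add: field_simps)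
  also have "\<dots> \<le> Cst * (measure M (arc a l) / l)"
  proof (rule mult_left_mono)
    show "mu0 / l \<le> measure M (arc a l) / l" using mu0 l by (intro divide_right_mono) auto
    have "0 < 1 - 1/(4*p)" using p0 p4 by (simp add: field_simps)
    then show "0 \<le> Cst" unfolding Cst_def using K_nonneg p0 by simp
  qed
  finally show ?thesis .
qed

lemma Cst_pos: "1/4 < p \<Longrightarrow> 0 < Cst"
proof -
  assume p4: "1/4 < p"
  have "0 < 1 - 1/(4*p)" using p0 p4 by (simp add: field_simps)
  then show ?thesis unfolding Cst_def using K_nonneg p0 by (simp add: add_pos_nonneg)
qed

lemma direction_if:
  assumes "1/4 < p"
  shows "\<exists>c > 0. \<forall>a l. 0 < l \<and> l \<le> 1 \<longrightarrow> measure M (arc a l) / l \<ge> c * poisson M (zarc a l)"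
proof (intro exI[of _ "1/Cst"] conjI allI impI)
  show "0 < 1/Cst" using Cst_pos[OF assms] by simp
  fix a l :: real assume l: "0 < l \<and> l \<le> 1"
  have "poisson M (zarc a l) \<le> Cst * (measure M (arc a l) / l)" using upper_one[OF assms] l by blast
  then show "1/Cst * poisson M (zarc a l) \<le> measure M (arc a l) / l"
    using Cst_pos[OF assms] by (simp add: field_simps)
qed

end
fun jj :: "nat \<Rightarrow> nat" where
  "jj 0 = 0"
| "jj (Suc n) = 2 * jj n + (if odd n then 0 else 1)"

lemma jj_lt: "jj n < 2^n"
  by (induction n) auto

lemma jj_div: "jj (m + s) div 2^s = jj m"
proof (induction s)
  case 0 then show ?case by simp
next
  case (Suc s)
  have "jj (m + Suc s) div 2^Suc s = (2 * jj (m+s) + (if odd (m+s) then 0 else 1)) div 2 div 2^s"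
    by (simp add: div_mult2_eq)
  also have "(2 * jj (m+s) + (if odd (m+s) then 0 else 1)) div 2 = jj (m+s)" by auto
  finally show ?case using Suc by simp
qed

lemma Jm_sub: "m \<le> n \<Longrightarrow> dyadic n (jj n) \<subseteq> dyadic m (jj m)"
  using dyadic_parent[of m "n - m" "jj n"] jj_div[of m "n - m"] by simp

lemma pi_sq: "pi^2 \<le> 10"
proof -
  have "pi \<le> 3.15" using pi_approx by simp
  then have "pi * pi \<le> 3.15 * 3.15" using pi_gt_zero by (intro mult_mono) auto
  then show ?thesis by (simp add: power2_eq_square)
qed

context sig begin

lemma mu_jj: "mu n (jj n) = p^n"
proof (induction n)
  case 0 then show ?case using mu00 by simp
next
  case (Suc n)
  show ?case
  proof (cases "odd n")
    case True
    then have "mu (Suc n) (jj (Suc n)) = p * mu n (jj n)" using mu_L[OF jj_lt[of n]] by simp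
    then show ?thesis using Suc by simp
  next
    case False
    then have "mu (Suc n) (jj (Suc n)) = p * mu n (jj n)" using mu_R[OF jj_lt[of n]] by simp
    then show ?thesis using Suc by simp
  qed
qed

lemma PK_chain:
  assumes mn: "m \<le> n" and t: "t \<in> dyadic m (jj m)"
  shows "PK (1/2^n) (real (jj n)/2^n + (1/2^n)/2) t \<ge> 4^m / (41 * 2^n)"
proof -
  define th where "th = real (jj n)/2^n + (1/2^n)/2"
  define x :: real where "x = 2^n"
  define y :: real where "y = 2^m"
  have xy: "0 < y" "y \<le> x" unfolding x_def y_def using mn by (auto intro: power_increasing)
  have "th \<in> dyadic n (jj n)" unfolding th_def dyadic_def by (auto simp: field_simps)
  then have th_in: "th \<in> dyadic m (jj m)" using Jm_sub[OF mn] by auto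
  have "\<bar>y * t - y * th\<bar> < 1" using t th_in unfolding dyadic_mem y_def by auto
  then have "\<bar>y * (t - th)\<bar> < 1" by (simp add: right_diff_distrib)
  then have "y * \<bar>t - th\<bar> < 1" using xy by (simp add: abs_mult)
  then have dd: "\<bar>t - th\<bar> < 1/y" using xy by (simp add: field_simps)
  have "(t - th)^2 \<le> (1/y)^2" using dd by (metis abs_ge_zero less_imp_le power2_abs power_mono)
  then have d2: "(t - th)^2 \<le> 1/y^2" by (simp add: power_divide)
  have l2: "(1/x)^2 \<le> 1/y^2" using xy by (simp add: power_divide frac_le power_mono)
  have "4 * pi^2 * (t - th)^2 \<le> 40 * (1/y^2)"
    using pi_sq d2 by (intro mult_mono) auto
  then have D: "(1/x)^2 + 4 * pi^2 * (t - th)^2 \<le> 41 / y^2" using l2 by simp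
  have Dp: "0 < (1/x)^2 + 4 * pi^2 * (t - th)^2" using xy unfolding x_def by (simp add: add_pos_nonneg)
  have "(1/x) / (41/y^2) \<le> (1/x) / ((1/x)^2 + 4 * pi^2 * (t - th)^2)"
    using D Dp xy by (intro divide_left_mono mult_pos_pos) (auto simp: x_def)
  also have "\<dots> \<le> PK (1/x) th t" using pk_ge[where l="1/x" and th=th and t=t] xy by (simp add: x_def)
  finally have "(1/x) / (41/y^2) \<le> PK (1/x) th t" .
  moreover have "(1/x) / (41/y^2) = 4^m / (41 * 2^n)" unfolding x_def y_def
    by (simp add: field_simps power_mult_distrib[symmetric] power2_eq_square)
  ultimately show ?thesis unfolding th_def x_def by simp
qed

end
lemma geo4: "(\<Sum>m\<le>k. (4::real)^m) * 3 = 4^(Suc k) - 1"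
  by (induction k) (auto simp: algebra_simps)

lemma geo4_le: "(\<Sum>m\<le>k. (4::real)^m) \<le> 2 * 4^k"
proof -
  have "(\<Sum>m\<le>k. (4::real)^m) * 3 = 4 * 4^k - 1" using geo4[of k] by simp
  moreover have "0 \<le> (4::real)^k" by simp
  ultimately show ?thesis by linarith
qed

context sig begin

lemma chain_pointwise:
  shows "(\<Sum>m<Suc n. 4^m / (41 * 2^n) * indicator (dyadic m (jj m)) t)
          \<le> 2 * PK (1/2^n) (real (jj n)/2^n + (1/2^n)/2) t"
proof -
  let ?P = "PK (1/2^n) (real (jj n)/2^n + (1/2^n)/2) t"
  let ?w = "\<lambda>m. (4::real)^m / (41 * 2^n)"
  have Pnn: "0 \<le> ?P" by (rule pk_nonneg) auto
  define S where "S = {m \<in> {..<Suc n}. t \<in> dyadic m (jj m)}"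
  show ?thesis
  proof (cases "S = {}")
    case True
    then have "\<And>m. m \<in> {..<Suc n} \<Longrightarrow> ?w m * indicator (dyadic m (jj m)) t = 0"
      unfolding S_def by (auto simp: indicator_def)
    then have "(\<Sum>m<Suc n. ?w m * indicator (dyadic m (jj m)) t) = 0" by simp
    then show ?thesis using Pnn by simp
  next
    case False
    have fS: "finite S" unfolding S_def by simp
    define m0 where "m0 = Max S"
    have m0S: "m0 \<in> S" unfolding m0_def using Max_in[OF fS False] .
    then have m0n: "m0 \<le> n" and tm0: "t \<in> dyadic m0 (jj m0)" unfolding S_def by auto
    have le: "?w m * indicator (dyadic m (jj m)) t \<le> (if m \<le> m0 then ?w m else 0)" if "m \<in> {..<Suc n}" for m
    proof (cases "m \<le> m0")
      case True then show ?thesis by (simp add: indicator_def)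
    next
      case False
      then have "m \<notin> S" using Max_ge[OF fS, of m] unfolding m0_def by auto
      then have "t \<notin> dyadic m (jj m)" using that unfolding S_def by auto
      then show ?thesis using False by simp
    qed
    have "(\<Sum>m<Suc n. ?w m * indicator (dyadic m (jj m)) t) \<le> (\<Sum>m<Suc n. (if m \<le> m0 then ?w m else 0))"
      using le by (rule sum_mono)
    also have "\<dots> = (\<Sum>m \<in> {x \<in> {..<Suc n}. x \<le> m0}. ?w m)" by (rule sum.inter_filter[symmetric]) simp
    also have "{x \<in> {..<Suc n}. x \<le> m0} = {..m0}" using m0n by auto
    also have "(\<Sum>m \<le> m0. ?w m) = (\<Sum>m \<le> m0. (4::real)^m) / (41 * 2^n)" by (simp add: sum_divide_distrib)
    also have "\<dots> \<le> (2 * 4^m0) / (41 * 2^n)" by (intro divide_right_mono geo4_le) simp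
    also have "\<dots> = 2 * ?w m0" by simp
    also have "\<dots> \<le> 2 * ?P" using PK_chain[OF m0n tm0] by simp
    finally show ?thesis .
  qed
qed

lemma direction_onlyif:
  assumes p4: "p \<le> 1/4"
    and H: "\<exists>c > 0. \<forall>a l. 0 < l \<and> l \<le> 1 \<longrightarrow> measure M (arc a l) / l \<ge> c * poisson M (zarc a l)"
  shows False
proof -
  obtain c where c: "c > 0" and Hc: "\<And>a l. 0 < l \<Longrightarrow> l \<le> 1 \<Longrightarrow> measure M (arc a l) / l \<ge> c * poisson M (zarc a l)"
    using H by blast
  obtain n :: nat where n: "82/c < real n" using reals_Archimedean2 by blast
  define l :: real where "l = 1/2^n"
  define a :: real where "a = real (jj n) / 2^n"
  have l: "0 < l" "l \<le> 1" unfolding l_def by auto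
  have arc: "arc a l = dyadic n (jj n)" unfolding a_def l_def by (rule arc_dyadic[OF jj_lt])
  have lhs: "measure M (arc a l) / l = p^n * 2^n" unfolding arc using mu_jj[of n] unfolding mu_def l_def by simp
  let ?w = "\<lambda>m. (4::real)^m / (41 * 2^n)"
  let ?g = "\<lambda>t. (\<Sum>m<Suc n. ?w m * indicator (dyadic m (jj m)) t)"
  have Ds: "dyadic m (jj m) \<in> sets M" for m using sets_M by simp
  have intk: "integrable M (\<lambda>t. ?w m * indicator (dyadic m (jj m)) t)" for m
  proof (rule integrable_mult_right)
    show "integrable M (indicator (dyadic m (jj m)) :: real \<Rightarrow> real)"
      using Ds[of m] finite_measure.emeasure_finite[OF fm, of "dyadic m (jj m)"] by (simp add: less_top)
  qed
  have int_g: "integrable M ?g" by (rule Bochner_Integration.integrable_sum) (rule intk)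
  have ig: "(\<integral>t. ?g t \<partial>M) = (\<Sum>m<Suc n. ?w m * p^m)"
    using intk space_M mu_jj unfolding mu_def by (subst Bochner_Integration.integral_sum) auto
  have "(\<Sum>m<Suc n. ?w m * p^m) \<ge> (\<Sum>m<Suc n. (4*p)^n / (41 * 2^n))"
  proof (rule sum_mono)
    fix m assume m: "m \<in> {..<Suc n}"
    have "(4*p)^n \<le> (4*p)^m" using m p0 p4 by (intro power_decreasing) auto
    then have "(4*p)^n / (41 * 2^n) \<le> (4*p)^m / (41 * 2^n)" by (intro divide_right_mono) auto
    also have "\<dots> = ?w m * p^m" by (simp add: power_mult_distrib)
    finally show "(4*p)^n / (41 * 2^n) \<le> ?w m * p^m" .
  qed
  also have "(\<Sum>m<Suc n. (4*p)^n / (41 * 2^n)) = real (Suc n) * (p^n * 2^n) / 41"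
  proof -
    have "(4::real)^n = 2^n * 2^n" by (metis power_mult_distrib numeral_times_numeral semiring_norm(12) semiring_norm(13))
    then have e: "(4*p)^n / (41 * 2^n) = p^n * 2^n / 41" by (simp add: power_mult_distrib field_simps)
    show ?thesis unfolding e by simp
  qed
  finally have sg: "real (Suc n) * (p^n * 2^n) / 41 \<le> (\<integral>t. ?g t \<partial>M)" using ig by simp
  have "(\<integral>t. ?g t \<partial>M) \<le> (\<integral>t. 2 * PK l (a + l/2) t \<partial>M)"
    using int_g PK_int[OF l] chain_pointwise unfolding a_def l_def by (intro integral_mono) auto
  also have "\<dots> = 2 * poisson M (zarc a l)" using poisson_PK by simp
  finally have "real (Suc n) * (p^n * 2^n) / 82 \<le> poisson M (zarc a l)" using sg by simp
  then have "c * (real (Suc n) * (p^n * 2^n) / 82) \<le> c * poisson M (zarc a l)"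
    using c by (intro mult_left_mono) auto
  also have "\<dots> \<le> p^n * 2^n" using Hc[OF l, of a] lhs by simp
  finally have "(c * real (Suc n) / 82) * (p^n * 2^n) \<le> 1 * (p^n * 2^n)" by simp
  then have "c * real (Suc n) / 82 \<le> 1" using p0 by (subst (asm) mult_le_cancel_right_pos) auto
  then have "real (Suc n) \<le> 82 / c" using c by (simp add: field_simps)
  then show False using n by simp
qed

end

theorem mainTheorem17:
  fixes p :: real and M :: "real measure"
  assumes "0 < p" and "p < 1 / 2" and "sigma_meas p M"
  shows "(\<exists>c > 0. \<forall>a l. 0 < l \<and> l \<le> 1 \<longrightarrow>
            measure M (arc a l) / l \<ge> c * poisson M (zarc a l))
         \<longleftrightarrow> p > 1 / 4"
proof -
  interpret sig p M using assms by (intro sig.intro)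
  show ?thesis
  proof
    assume H: "\<exists>c > 0. \<forall>a l. 0 < l \<and> l \<le> 1 \<longrightarrow> measure M (arc a l) / l \<ge> c * poisson M (zarc a l)"
    show "p > 1/4"
    proof (rule ccontr)
      assume "\<not> p > 1/4"
      then have "p \<le> 1/4" by simp
      then show False using direction_onlyif H by blast
    qed
  next
    assume "p > 1/4"
    then show "\<exists>c > 0. \<forall>a l. 0 < l \<and> l \<le> 1 \<longrightarrow> measure M (arc a l) / l \<ge> c * poisson M (zarc a l)"
      by (rule direction_if)
  qed
qed

end
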